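(* Let $\lambda>-1/2$ and $-1<s<1$. Then for $k=2,3,\ldots$, \[ \int_{-1}^{1} |x-s| (1-x^2)^{\lambda-\frac {1}{2}} C_k^{\lambda}(x)\, dx ~=~ \frac {8\lambda(\lambda+1)} {k(k-1)(k+2\lambda)(k+2\lambda+1)} (1-s^2)^{\lambda+\frac {3}{2}} C_{k-2}^{\lambda+2} (s). \]
   Context: The Gegenbauer polynomial $C_k^{\lambda}(x)$ of degree $k$ associated to $\lambda$ is the coefficient of $z^k$ in the expansion $(1-2xz+z^2)^{-\lambda}=\sum_{k=0}^\infty C_k^\lambda(x)z^k$ ($-1<x<1$, $|z|<1$); equivalently $C_k^{\lambda}(x)=\sum_{j=0}^{[k/2]}\frac{(-1)^j(\lambda)_{k-j}}{j!\,(k-2j)!}(2x)^{k-2j}$, where $(\lambda)_0=1$ and $(\lambda)_k=\lambda(\lambda+1)\cdots(\lambda+k-1)$. *)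

theory Defs
  imports "HOL-Analysis.Analysis"
begin

definition gegenbauer :: "nat \<Rightarrow> real \<Rightarrow> real \<Rightarrow> real" where
  "gegenbauer k lam x =
     (\<Sum>j = 0..k div 2. (-1) ^ j * pochhammer lam (k - j) / (fact j * fact (k - 2 * j))
                         * (2 * x) ^ (k - 2 * j))"

end

theory Submission
  imports Defs
begin


definition gc :: "real \<Rightarrow> nat \<Rightarrow> nat \<Rightarrow> real" where
  "gc mu j r = (-1)^j * pochhammer mu (j + r) / (fact j * fact r)"

lemma alg: fixes I B mu s p D :: real assumes "I \<ge> 0" "B \<ge> 0" "D > 0"
 shows "4*(B+2) * (s*(p*(mu+(I+B+2)))/((B+2)*(B+1)*D)) + (B+1+2*mu)*(s*p/((I+1)*D)) = -(2*I+B+3)*((2*I+B+3)+2*mu)*(-s*p/((I+1)*(B+1)*D))"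
proof -
  have "I+1 \<noteq> 0" "B+1 \<noteq> 0" "B+2 \<noteq> 0" "D \<noteq> 0" using assms by auto
  then show ?thesis by (simp add: divide_simps) (simp add: algebra_simps)
qed

lemma coefA:
  fixes mu :: real and i b :: nat
  shows "- (real (2*i+b+3)) * (real (2*i+b+3) + 2*mu) * gc mu (i+1) (b+1)
     = 4*mu*real (b+2) * gc (mu+1) i (b+2) - mu * (real b + 1 + 2*mu) * gc (mu+1) (i+1) b"
proof -
  define p where "p = pochhammer mu (i+b+2)"
  define D :: real where "D = fact i * fact b"
  define s :: real where "s = (-1)^i"
  have Dp: "D > 0" unfolding D_def by simp
  have e1: "mu * pochhammer (mu+1) (i+b+2) = p * (mu + real (i+b+2))"
    unfolding p_def using pochhammer_rec[of mu "i+b+2"] pochhammer_rec'[of mu "i+b+2"] by simp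
  have e2: "mu * pochhammer (mu+1) (i+1+b) = p"
    unfolding p_def using pochhammer_rec[of mu "i+b+1"] by (simp add: algebra_simps numeral_2_eq_2)
  have g1: "gc mu (i+1) (b+1) = - s * p / (real (i+1) * real (b+1) * D)"
    unfolding gc_def p_def s_def D_def by (simp add: algebra_simps numeral_2_eq_2)
  have g2: "mu * gc (mu+1) i (b+2) = s * (p * (mu + real (i+b+2))) / (real (b+2) * real (b+1) * D)"
  proof -
    have "gc (mu+1) i (b+2) = s * pochhammer (mu+1) (i+b+2) / (real (b+2) * real (b+1) * D)"
      unfolding gc_def s_def D_def by (simp add: algebra_simps numeral_2_eq_2)
    then have "mu * gc (mu+1) i (b+2) = s * (mu * pochhammer (mu+1) (i+b+2)) / (real (b+2) * real (b+1) * D)"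
      by simp
    then show ?thesis by (simp only: e1)
  qed
  have g3: "mu * gc (mu+1) (i+1) b = - s * p / (real (i+1) * D)"
    unfolding gc_def s_def D_def using e2 by (simp add: algebra_simps)
  have "4*mu*real (b+2) * gc (mu+1) i (b+2) - mu * (real b + 1 + 2*mu) * gc (mu+1) (i+1) b
      = 4*real (b+2) * (mu * gc (mu+1) i (b+2)) - (real b + 1 + 2*mu) * (mu * gc (mu+1) (i+1) b)"
    by (simp add: algebra_simps)
  also have "\<dots> = 4*real (b+2) * (s * (p * (mu + real (i+b+2))) / (real (b+2) * real (b+1) * D))
        + (real b + 1 + 2*mu) * (s * p / (real (i+1) * D))"
    by (simp only: g2 g3)
  also have "\<dots> = - (real (2*i+b+3)) * (real (2*i+b+3) + 2*mu) * (- s * p / (real (i+1) * real (b+1) * D))"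
  proof -
    have r: "real (i+b+2) = real i + real b + 2" "real (b+2) = real b + 2" "real (b+1) = real b + 1"
      "real (i+1) = real i + 1" "real (2*i+b+3) = 2 * real i + real b + 3" by simp_all
    show ?thesis unfolding r using alg[where I="real i" and B="real b" and mu=mu and s=s and p=p and D=D] Dp by simp
  qed
  finally have fin: "4*mu*real (b+2) * gc (mu+1) i (b+2) - mu * (real b + 1 + 2*mu) * gc (mu+1) (i+1) b = - (real (2*i+b+3)) * (real (2*i+b+3) + 2*mu) * (- s * p / (real (i+1) * real (b+1) * D))" .
  show ?thesis unfolding g1 fin[symmetric] ..
qed

lemma coefB:
  fixes mu :: real and i :: nat
  shows "- (real (2*i+2)) * (real (2*i+2) + 2*mu) * gc mu (i+1) 0 = 4*mu*1 * gc (mu+1) i 1"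
proof -
  define p where "p = pochhammer mu (i+1)"
  define s :: real where "s = (-1)^i"
  have fp: "fact i > (0::real)" by simp
  have e1: "mu * pochhammer (mu+1) (i+1) = p * (mu + real (i+1))"
    unfolding p_def using pochhammer_rec[of mu "i+1"] pochhammer_rec'[of mu "i+1"] by simp
  have g1: "gc mu (i+1) 0 = (- s) * p / (real (i+1) * fact i)"
    unfolding gc_def p_def s_def by (simp add: algebra_simps)
  have g2: "mu * gc (mu+1) i 1 = s * (mu * pochhammer (mu+1) (i+1)) / fact i"
    unfolding gc_def s_def by (simp add: algebra_simps)
  have "4*mu*1 * gc (mu+1) i 1 = 4 * (mu * gc (mu+1) i 1)" by simp
  also have "\<dots> = 4 * (s * (p * (mu + real (i+1))) / fact i)" unfolding g2 e1 ..
  also have "\<dots> = - (real (2*i+2)) * (real (2*i+2) + 2*mu) * ((- s) * p / (real (i+1) * fact i))"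
    using fp by (simp add: divide_simps) (simp add: algebra_simps)
  finally show ?thesis unfolding g1 by simp
qed

lemma coefC:
  fixes mu :: real and m :: nat
  shows "- (real m + 1) * (real m + 1 + 2*mu) * gc mu 0 (m+1) = - mu * (real m + 2*mu + 1) * gc (mu+1) 0 m"
proof -
  define p where "p = pochhammer mu (m+1)"
  have fp: "fact m > (0::real)" by simp
  have e2: "mu * pochhammer (mu+1) m = p"
    unfolding p_def using pochhammer_rec[of mu m] by simp
  have g1: "gc mu 0 (m+1) = p / (real (m+1) * fact m)"
    unfolding gc_def p_def by (simp add: algebra_simps)
  have g2: "mu * gc (mu+1) 0 m = (mu * pochhammer (mu+1) m) / fact m"
    unfolding gc_def by (simp add: algebra_simps)
  have "- mu * (real m + 2*mu + 1) * gc (mu+1) 0 m = - (real m + 2*mu + 1) * (mu * gc (mu+1) 0 m)" by (simp add: algebra_simps)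
  also have "\<dots> = - (real m + 2*mu + 1) * (p / fact m)" unfolding g2 e2 ..
  also have "\<dots> = - (real m + 1) * (real m + 1 + 2*mu) * (p / (real (m+1) * fact m))"
    using fp by (simp add: divide_simps) (simp add: algebra_simps)
  finally show ?thesis unfolding g1 by simp
qed

lemma geg_gc: "gegenbauer n mu x = (\<Sum>j\<le>n div 2. gc mu j (n - 2*j) * (2*x)^(n - 2*j))"
  unfolding gegenbauer_def gc_def atLeast0AtMost[symmetric]
proof (rule sum.cong[OF refl])
  fix j assume "j \<in> {0..n div 2}"
  then have "j + (n - 2*j) = n - j" by auto
  then show "(-1) ^ j * pochhammer mu (n - j) / (fact j * fact (n - 2 * j)) * (2 * x) ^ (n - 2 * j) =
         (-1) ^ j * pochhammer mu (j + (n - 2 * j)) / (fact j * fact (n - 2 * j)) * (2 * x) ^ (n - 2 * j)"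
    by simp
qed

definition gd :: "nat \<Rightarrow> real \<Rightarrow> real \<Rightarrow> real" where
  "gd n mu x = (\<Sum>j\<le>n div 2. gc mu j (n - 2*j) * (2 * real (n - 2*j) * (2*x)^(n - 2*j - 1)))"

lemma pow2_deriv: "((\<lambda>x::real. (2*x)^r) has_real_derivative (2 * real r * (2*x)^(r-1))) (at x)"
proof -
  have "((\<lambda>x::real. (2*x)^r) has_real_derivative (real r * (2*x)^(r-1) * 2)) (at x)"
    by (rule derivative_eq_intros refl | simp)+
  then show ?thesis by (simp add: algebra_simps)
qed

lemma geg_deriv: "((\<lambda>x. gegenbauer n mu x) has_real_derivative gd n mu x) (at x)"
  unfolding geg_gc gd_def
  by (rule DERIV_sum, rule DERIV_cmult, rule pow2_deriv)


lemma Q_term: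
  fixes mu x g :: real and r :: nat
  shows "2*mu*((1-x^2)*(g*(2*real r*(2*x)^(r-1))) - (2*mu+1)*x*(g*(2*x)^r))
        = 4*mu*real r*g*(2*x)^(r-1) - mu*(real r+2*mu+1)*g*(2*x)^(r+1)"
proof (cases r)
  case 0
  then show ?thesis by (simp add: algebra_simps)
next
  case (Suc r')
  then show ?thesis by (simp add: algebra_simps power2_eq_square)
qed

lemma Q_AB:
  fixes mu t :: real and m i :: nat
  assumes "2*i+2 \<le> m"
  shows "- (real m+1)*(real m+1+2*mu)*gc mu (Suc i) (m+1-2*Suc i)*t^(m+1-2*Suc i)
       = 4*mu*real(m-2*i)*gc (mu+1) i (m-2*i)*t^(m-2*i-1)
         - mu*(real(m-2*Suc i)+2*mu+1)*gc (mu+1) (Suc i) (m-2*Suc i)*t^(m-2*Suc i+1)"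
proof -
  define b where "b = m - 2*i - 2"
  have e: "m+1-2*Suc i = b+1" "m-2*i-1 = b+1" "m-2*i = b+2" "m-2*Suc i = b" "real m + 1 = real (2*i+b+3)" "b+2-1 = b+1"
    using assms unfolding b_def by auto
  have c: "- real (2*i+b+3)*(real (2*i+b+3)+2*mu)*gc mu (Suc i) (b+1)
      = 4*mu*real(b+2)*gc (mu+1) i (b+2) - mu*(real b+2*mu+1)*gc (mu+1) (Suc i) b"
    using coefA[of i b mu] by (simp only: Suc_eq_plus1 ac_simps)
  have "(- real (2*i+b+3)*(real (2*i+b+3)+2*mu)*gc mu (Suc i) (b+1)) * t^(b+1)
      = (4*mu*real(b+2)*gc (mu+1) i (b+2) - mu*(real b+2*mu+1)*gc (mu+1) (Suc i) b) * t^(b+1)"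
    unfolding c ..
  then show ?thesis unfolding e left_diff_distrib .
qed

lemma Q_A_last:
  fixes mu t :: real and m i :: nat
  assumes "2*i+1 = m"
  shows "- (real m+1)*(real m+1+2*mu)*gc mu (Suc i) (m+1-2*Suc i)*t^(m+1-2*Suc i)
       = 4*mu*real(m-2*i)*gc (mu+1) i (m-2*i)*t^(m-2*i-1)"
proof -
  have e: "m+1-2*Suc i = 0" "m-2*i = 1" "m-2*i-1 = 0" "real m + 1 = real (2*i+2)"
    using assms by auto
  show ?thesis unfolding e using coefB[of i mu]
    by (simp add: algebra_simps)
qed

lemma Q_B0:
  fixes mu t :: real and m :: nat
  shows "- (real m+1)*(real m+1+2*mu)*gc mu 0 (m+1-2*0)*t^(m+1-2*0)
       = - (mu*(real(m-2*0)+2*mu+1)*gc (mu+1) 0 (m-2*0)*t^(m-2*0+1))"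
  using coefC[of m mu] by (simp add: algebra_simps)



lemma Q:
  fixes mu x :: real and m :: nat
  shows "2*mu*((1-x^2) * gd m (mu+1) x - (2*mu+1)*x*gegenbauer m (mu+1) x)
       = -(real m+1)*(real m+1+2*mu)*gegenbauer (m+1) mu x"
proof -
  define t where "t = 2*x"
  define A where "A j = 4*mu*real(m-2*j)*gc (mu+1) j (m-2*j)*t^(m-2*j-1)" for j
  define B where "B j = mu*(real(m-2*j)+2*mu+1)*gc (mu+1) j (m-2*j)*t^(m-2*j+1)" for j
  define R where "R j = -(real m+1)*(real m+1+2*mu)*gc mu j (m+1-2*j)*t^(m+1-2*j)" for j
  have L: "2*mu*((1-x^2) * gd m (mu+1) x - (2*mu+1)*x*gegenbauer m (mu+1) x)
      = (\<Sum>j\<le>m div 2. A j) - (\<Sum>j\<le>m div 2. B j)"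
    unfolding gd_def geg_gc sum_distrib_left sum_subtractf[symmetric] right_diff_distrib
  proof (rule sum.cong[OF refl])
    fix j
    show "2 * mu * ((1 - x^2) * (gc (mu + 1) j (m - 2 * j) * (2 * real (m - 2 * j) * (2 * x) ^ (m - 2 * j - 1)))) -
          2 * mu * ((2 * mu + 1) * x * (gc (mu + 1) j (m - 2 * j) * (2 * x) ^ (m - 2 * j))) = A j - B j"
      using Q_term[of mu x "gc (mu + 1) j (m - 2 * j)" "m - 2*j"] unfolding A_def B_def t_def
      by (simp add: algebra_simps)
  qed
  have Rs: "-(real m+1)*(real m+1+2*mu)*gegenbauer (m+1) mu x = (\<Sum>j\<le>(m+1) div 2. R j)"
    unfolding geg_gc sum_distrib_left R_def t_def by (simp add: algebra_simps)
  have AB: "R (Suc i) = A i - B (Suc i)" if "2*i+2 \<le> m" for i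
    unfolding R_def A_def B_def using Q_AB[OF that, of mu t] .
  have B0: "R 0 = - B 0" unfolding R_def B_def using Q_B0[of m mu t] .
  obtain p where p: "m = 2*p \<or> m = 2*p+1" by (metis dvd_mult_div_cancel odd_two_times_div_two_succ even_iff_mod_2_eq_zero mult.commute)
  then show ?thesis
  proof
    assume m: "m = 2*p"
    have d: "m div 2 = p" "(m+1) div 2 = p" using m by auto
    have Ap: "A p = 0" unfolding A_def using m by simp
    have "(\<Sum>j\<le>m div 2. A j) - (\<Sum>j\<le>m div 2. B j)
        = (\<Sum>i<p. A i) + A p - (B 0 + (\<Sum>i<p. B (Suc i)))"
    proof -
      have "sum A {..p} = sum A {..<p} + A p" by (simp add: lessThan_Suc_atMost[symmetric])
      moreover have "sum B {..p} = B 0 + (\<Sum>i<p. B (Suc i))" by (rule sum.atMost_shift)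
      ultimately show ?thesis unfolding d by simp
    qed
    also have "\<dots> = R 0 + (\<Sum>i<p. R (Suc i))"
      using AB m by (simp add: Ap B0 sum_subtractf[symmetric])
    also have "\<dots> = (\<Sum>j\<le>(m+1) div 2. R j)" unfolding d by (rule sum.atMost_shift[symmetric])
    finally show ?thesis using L Rs by simp
  next
    assume m: "m = 2*p+1"
    have d: "m div 2 = p" "(m+1) div 2 = Suc p" using m by auto
    have "(\<Sum>j\<le>m div 2. A j) - (\<Sum>j\<le>m div 2. B j)
        = (\<Sum>i<p. A i) + A p - (B 0 + (\<Sum>i<p. B (Suc i)))"
    proof -
      have "sum A {..p} = sum A {..<p} + A p" by (simp add: lessThan_Suc_atMost[symmetric])
      moreover have "sum B {..p} = B 0 + (\<Sum>i<p. B (Suc i))" by (rule sum.atMost_shift)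
      ultimately show ?thesis unfolding d by simp
    qed
    also have "\<dots> = R 0 + ((\<Sum>i<p. R (Suc i)) + R (Suc p))"
    proof -
      have "R (Suc p) = A p" unfolding R_def A_def using Q_A_last[of p m mu t] m by simp
      moreover have "(\<Sum>i<p. R (Suc i)) = (\<Sum>i<p. A i - B (Suc i))"
        using AB m by (intro sum.cong) auto
      ultimately show ?thesis using B0 by (simp add: sum_subtractf)
    qed
    also have "\<dots> = (\<Sum>j\<le>(m+1) div 2. R j)"
      unfolding d sum.atMost_shift[of R "Suc p"] sum.lessThan_Suc ..
    finally show ?thesis using L Rs by simp
  qed
qed




lemma Phi_deriv:
  fixes mu x :: real and m :: nat
  assumes "-1 < x" "x < 1"
  shows "((\<lambda>x. (1-x^2) powr (mu+1/2) * gegenbauer m (mu+1) x) has_real_derivative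
          (1-x^2) powr (mu-1/2) * ((1-x^2) * gd m (mu+1) x - (2*mu+1)*x*gegenbauer m (mu+1) x)) (at x)"
proof -
  have u: "1 - x^2 > 0" using assms by (simp add: abs_square_less_1 abs_less_iff)
  have pw: "(1-x^2) powr (mu+1/2) = (1-x^2) * (1-x^2) powr (mu-1/2)"
  proof -
    have "(1-x^2) powr (mu+1/2) = (1-x^2) powr (1 + (mu-1/2))" by (simp add: algebra_simps)
    also have "\<dots> = (1-x^2) powr 1 * (1-x^2) powr (mu-1/2)" by (rule powr_add)
    finally show ?thesis using u by simp
  qed
  have pw2: "(1-x^2) powr (mu+1/2-1) = (1-x^2) powr (mu-1/2)" by (simp add: algebra_simps)
  have "((\<lambda>x. (1-x^2) powr (mu+1/2) * gegenbauer m (mu+1) x) has_real_derivative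
          (mu+1/2) * (1-x^2) powr (mu+1/2-1) * (0 - 2 * x ^ 1 * 1) * gegenbauer m (mu+1) x
          + (1-x^2) powr (mu+1/2) * gd m (mu+1) x) (at x)"
    by (rule derivative_eq_intros refl geg_deriv u | simp)+
  moreover have "(mu+1/2) * (1-x^2) powr (mu+1/2-1) * (0 - 2 * x ^ 1 * 1) * gegenbauer m (mu+1) x
          + (1-x^2) powr (mu+1/2) * gd m (mu+1) x
       = (1-x^2) powr (mu-1/2) * ((1-x^2) * gd m (mu+1) x - (2*mu+1)*x*gegenbauer m (mu+1) x)"
    unfolding pw pw2 by (simp add: algebra_simps)
  ultimately show ?thesis by simp
qed


lemma abs_int:
  fixes F G g :: "real \<Rightarrow> real" and s :: real
  assumes s: "-1 < s" "s < 1"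
    and cF: "continuous_on {-1..1} F" and cG: "continuous_on {-1..1} G"
    and b: "F (-1) = 0" "F 1 = 0" "G (-1) = 0" "G 1 = 0"
    and dF: "\<And>x. -1 < x \<Longrightarrow> x < 1 \<Longrightarrow> (F has_real_derivative G x) (at x)"
    and dG: "\<And>x. -1 < x \<Longrightarrow> x < 1 \<Longrightarrow> (G has_real_derivative g x) (at x)"
  shows "((\<lambda>x. \<bar>x - s\<bar> * g x) has_integral (F s + F s)) {-1..1}"
proof (rule has_integral_combine[of "-1" s 1])
  show "-1 \<le> s" "s \<le> 1" using s by auto
  define H2 where "H2 x = (s - x) * G x + F x" for x
  have "((\<lambda>x. \<bar>x - s\<bar> * g x) has_integral (H2 s - H2 (-1))) {-1..s}"
  proof (rule fundamental_theorem_of_calculus_interior)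
    show "-1 \<le> s" using s by simp
    have "continuous_on {-1..s} F" "continuous_on {-1..s} G"
      using cF cG s by (auto elim!: continuous_on_subset)
    then show "continuous_on {-1..s} H2" unfolding H2_def by (intro continuous_intros) auto
    fix x assume x: "x \<in> {-1<..<s}"
    then have x1: "-1 < x" "x < 1" using s by auto
    have "(H2 has_real_derivative ((0 - 1) * G x + (s - x) * g x + G x)) (at x)"
      unfolding H2_def by (rule derivative_eq_intros refl dF dG x1 | simp)+
    moreover have "(0 - 1) * G x + (s - x) * g x + G x = \<bar>x - s\<bar> * g x" using x by auto
    ultimately show "(H2 has_vector_derivative \<bar>x - s\<bar> * g x) (at x)"
      unfolding has_real_derivative_iff_has_vector_derivative[symmetric] by metis
  qed
  then show "((\<lambda>x. \<bar>x - s\<bar> * g x) has_integral F s) {-1..s}"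
    unfolding H2_def using b by simp
  define H1 where "H1 x = (x - s) * G x - F x" for x
  have "((\<lambda>x. \<bar>x - s\<bar> * g x) has_integral (H1 1 - H1 s)) {s..1}"
  proof (rule fundamental_theorem_of_calculus_interior)
    show "s \<le> 1" using s by simp
    have "continuous_on {s..1} F" "continuous_on {s..1} G"
      using cF cG s by (auto elim!: continuous_on_subset)
    then show "continuous_on {s..1} H1" unfolding H1_def by (intro continuous_intros) auto
    fix x assume x: "x \<in> {s<..<1}"
    then have x1: "-1 < x" "x < 1" using s by auto
    have "(H1 has_real_derivative ((1 - 0) * G x + (x - s) * g x - G x)) (at x)"
      unfolding H1_def by (rule derivative_eq_intros refl dF dG x1 | simp)+
    moreover have "(1 - 0) * G x + (x - s) * g x - G x = \<bar>x - s\<bar> * g x" using x by auto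
    ultimately show "(H1 has_vector_derivative \<bar>x - s\<bar> * g x) (at x)"
      unfolding has_real_derivative_iff_has_vector_derivative[symmetric] by metis
  qed
  then show "((\<lambda>x. \<bar>x - s\<bar> * g x) has_integral F s) {s..1}"
    unfolding H1_def using b by simp
qed


lemma geg_cont: "continuous_on S (gegenbauer n mu)"
  by (rule continuous_at_imp_continuous_on) (auto intro: DERIV_isCont geg_deriv)

lemma sq_le1: fixes x :: real assumes "-1 \<le> x" "x \<le> 1" shows "0 \<le> 1 - x^2"
proof -
  have "0 \<le> (1-x)*(1+x)" using assms by (intro mult_nonneg_nonneg) auto
  then show ?thesis by (simp add: power2_eq_square algebra_simps)
qed

lemma powr_side: fixes a :: real assumes "a > 0" shows "\<forall>x\<in>{-1..1::real}. 0 \<le> 1 - x^2 \<and> (1 - x^2 = 0 \<longrightarrow> 0 < a)"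
proof
  fix x :: real assume "x \<in> {-1..1}"
  then have "0 \<le> 1 - x^2" by (intro sq_le1) auto
  then show "0 \<le> 1 - x^2 \<and> (1 - x^2 = 0 \<longrightarrow> 0 < a)" using assms by simp
qed

lemma powr_geg_cont:
  assumes "a > 0"
  shows "continuous_on {-1..1} (\<lambda>x::real. (1-x^2) powr a * gegenbauer n mu x)"
  by (intro continuous_intros geg_cont continuous_on_powr' powr_side assms)

theorem lemma2p3:
  fixes lam s :: real and k :: nat
  assumes "lam > -1/2" and "-1 < s" and "s < 1" and "k \<ge> 2"
  shows "((\<lambda>x. \<bar>x - s\<bar> * (1 - x^2) powr (lam - 1/2) * gegenbauer k lam x) has_integral
           (8 * lam * (lam + 1) / (real k * (real k - 1) * (real k + 2 * lam) * (real k + 2 * lam + 1))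
            * (1 - s^2) powr (lam + 3/2) * gegenbauer (k - 2) (lam + 2) s)) {-1..1}"
proof -
  obtain n where kn: "k = n + 2" using assms(4) by (metis add.commute le_Suc_ex)
  have lp: "lam + 1 > 0" "lam + 1/2 > 0" "lam + 3/2 > 0" using assms(1) by auto
  define K where "K = (real n + 2) * (real n + 2 + 2*lam)"
  define c where "c = 4*lam*(lam+1) / (real k * (real k + 2*lam) * (real k - 1) * (real k + 2*lam + 1))"
  define al where "al = (real n + 1) * (real n + 2*lam + 3) / (2*(lam+1))"
  define Fe where "Fe x = (1-x^2) powr (lam+3/2) * gegenbauer n (lam+2) x" for x
  define P1 where "P1 x = (1-x^2) powr (lam+1/2) * gegenbauer (n+1) (lam+1) x" for x
  define g where "g x = (1-x^2) powr (lam-1/2) * gegenbauer k lam x" for x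
  define F where "F x = c * Fe x" for x
  define G where "G x = c * (- al) * P1 x" for x
  have Kpos: "K > 0" unfolding K_def using lp by (intro mult_pos_pos) auto
  have cal: "c * al = 2*lam / K"
  proof -
    have "real k = real n + 2" "real k - 1 = real n + 1" "real k + 2*lam + 1 = real n + 2*lam + 3" using kn by auto
    then have "c * al = 4*lam*(lam+1) / (K * (real n + 1) * (real n + 2*lam + 3)) * ((real n + 1) * (real n + 2*lam + 3) / (2*(lam+1)))"
      unfolding c_def al_def K_def by (simp add: algebra_simps)
    also have "\<dots> = 2*lam / K"
      using lp Kpos by (simp add: divide_simps)
    finally show ?thesis .
  qed
  have dF: "(F has_real_derivative G x) (at x)" if x: "-1 < x" "x < 1" for x
  proof -
    have e1: "lam + 3/2 = (lam+1)+1/2" "lam+2 = (lam+1)+1" "lam + 1/2 = (lam+1)-1/2" by simp_all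
    have d: "(Fe has_real_derivative
          (1-x^2) powr ((lam+1)-1/2) * ((1-x^2) * gd n ((lam+1)+1) x - (2*(lam+1)+1)*x*gegenbauer n ((lam+1)+1) x)) (at x)"
      unfolding Fe_def[abs_def] e1 by (rule Phi_deriv[OF x])
    have q: "2*(lam+1)*((1-x^2) * gd n ((lam+1)+1) x - (2*(lam+1)+1)*x*gegenbauer n ((lam+1)+1) x)
       = -(real n+1)*(real n+1+2*(lam+1))*gegenbauer (n+1) (lam+1) x" by (rule Q)
    have bq: "(1-x^2) * gd n ((lam+1)+1) x - (2*(lam+1)+1)*x*gegenbauer n ((lam+1)+1) x
        = - al * gegenbauer (n+1) (lam+1) x"
      using q lp unfolding al_def by (simp add: field_simps)
    have eqn: "(1-x^2) powr ((lam+1)-1/2) * ((1-x^2) * gd n ((lam+1)+1) x - (2*(lam+1)+1)*x*gegenbauer n ((lam+1)+1) x)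
        = - al * P1 x"
      unfolding bq P1_def e1(3)[symmetric] by (simp add: algebra_simps)
    have "(Fe has_real_derivative - al * P1 x) (at x)"
      using d unfolding eqn .
    then have "(F has_real_derivative c * (- al * P1 x)) (at x)"
      unfolding F_def[abs_def] by (rule DERIV_cmult)
    then show ?thesis unfolding G_def by (simp add: algebra_simps)
  qed
  have dG: "(G has_real_derivative g x) (at x)" if x: "-1 < x" "x < 1" for x
  proof -
    define Bk where "Bk = (1-x^2) * gd (n+1) (lam+1) x - (2*lam+1)*x*gegenbauer (n+1) (lam+1) x"
    have d: "(P1 has_real_derivative (1-x^2) powr (lam-1/2) * Bk) (at x)"
      unfolding P1_def[abs_def] Bk_def by (rule Phi_deriv[OF x])
    have q: "2*lam*Bk = -K * gegenbauer k lam x"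
      unfolding Bk_def K_def kn using Q[of lam x "n+1"] by (simp add: algebra_simps)
    have "(G has_real_derivative c * (- al) * ((1-x^2) powr (lam-1/2) * Bk)) (at x)"
      unfolding G_def[abs_def] using d by (rule DERIV_cmult)
    moreover have "c * (- al) * ((1-x^2) powr (lam-1/2) * Bk) = g x"
    proof -
      have "c * (- al) * ((1-x^2) powr (lam-1/2) * Bk) = - ((1-x^2) powr (lam-1/2) * (2*lam*Bk)) / K"
        using cal by (simp add: algebra_simps)
      also have "\<dots> = g x" unfolding q g_def using Kpos by simp
      finally show ?thesis .
    qed
    ultimately show ?thesis by simp
  qed
  have cF: "continuous_on {-1..1} F" unfolding F_def Fe_def
    by (intro continuous_intros powr_geg_cont lp)
  have cG: "continuous_on {-1..1} G" unfolding G_def P1_def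
    by (intro continuous_intros powr_geg_cont lp)
  have b: "F (-1) = 0" "F 1 = 0" "G (-1) = 0" "G 1 = 0"
    unfolding F_def Fe_def G_def P1_def by simp_all
  have I: "((\<lambda>x. \<bar>x - s\<bar> * g x) has_integral (F s + F s)) {-1..1}"
    by (rule abs_int[OF assms(2,3) cF cG b dF dG])
  have fe: "(\<lambda>x. \<bar>x - s\<bar> * (1 - x^2) powr (lam - 1/2) * gegenbauer k lam x) = (\<lambda>x. \<bar>x - s\<bar> * g x)"
    unfolding g_def by (simp add: mult.assoc)
  have ve: "F s + F s = 8 * lam * (lam + 1) / (real k * (real k - 1) * (real k + 2 * lam) * (real k + 2 * lam + 1))
            * (1 - s^2) powr (lam + 3/2) * gegenbauer (k - 2) (lam + 2) s"
    unfolding F_def Fe_def c_def using kn by (simp add: algebra_simps)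
  show ?thesis using I unfolding fe ve .
qed


end
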